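(* On any labelled transition system, the relations $\leftrightarrow_b$, $\leftrightarrow_b^{ds}$ and $\leftrightarrow_b^{\Delta}$ are equivalence relations.
   Context: Fix a set $\mathrm{Act}$ of actions containing a special action $\tau$. An LTS is $(S,\to)$ with $\to\subseteq S\times\mathrm{Act}\times S$. A path from $s$ is an alternating sequence $s_0,a_1,s_1,a_2,\dots$ (ending with a state if finite) with $s_0=s$ and $s_{k-1}\xrightarrow{a_k}s_k$; it is maximal if infinite or if its last state has no outgoing transitions. A colouring is a function $\mathcal{C}$ from $S$ into an arbitrary set of colours. For a path $\pi$, $\mathcal{C}(\pi)$ is obtained from $\mathcal{C}(s_0),a_1,\mathcal{C}(s_1),a_2,\dots$ by contracting every finite maximal consecutive subsequence $C,\tau,C,\tau,\dots,\tau,C$ and every infinite one $C,\tau,C,\tau,\dots$ to $C$. For $\pi$ from $s$, $\mathcal{C}(\pi)$ is a $\mathcal{C}$-coloured trace of $s$; complete if $\pi$ is maximal; divergent if $\pi$ is infinite and $\mathcal{C}(\pi)$ finite. $\mathcal{C}$ is consistent if any two states of equal colour have the same $\mathcal{C}$-coloured traces; fully consistent if any two states of equal colour have the same complete $\mathcal{C}$-coloured traces; a consistent $\mathcal{C}$ preserves divergence if any two states of equal colour have the same divergent $\mathcal{C}$-coloured traces. $s\leftrightarrow_b t$ iff some consistent colouring $\mathcal{C}$ has $\mathcal{C}(s)=\mathcal{C}(t)$; $s\leftrightarrow_b^{ds}t$ iff some fully consistent colouring $\mathcal{C}$ has $\mathcal{C}(s)=\mathcal{C}(t)$; $s\leftrightarrow_b^{\Delta}t$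 iff some consistent, divergence preserving colouring $\mathcal{C}$ has $\mathcal{C}(s)=\mathcal{C}(t)$. *)

theory Defs
  imports Main "HOL-Library.Extended_Nat"
begin

text \<open>An LTS over states of type 's and actions of type 'a is a transition
relation T :: ('s \<times> 'a \<times> 's) set; the state set is the whole type 's.
The special action tau is a parameter.

A path is a triple (s0, st, n): start state s0, number of transitions
n :: enat (infinity for infinite paths), and st i = (a_(i+1), s_(i+1)) for i < n
(values of st at indices \<ge> n are irrelevant).\<close>

type_synonym ('s, 'a) path = "'s \<times> (nat \<Rightarrow> 'a \<times> 's) \<times> enat"

fun path_state :: "('s, 'a) path \<Rightarrow> nat \<Rightarrow> 's" where
  "path_state (s0, st, n) 0 = s0"
| "path_state (s0, st, n) (Suc i) = snd (st i)"

fun path_len :: "('s, 'a) path \<Rightarrow> enat" where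
  "path_len (s0, st, n) = n"

fun path_act :: "('s, 'a) path \<Rightarrow> nat \<Rightarrow> 'a" where
  "path_act (s0, st, n) i = fst (st i)"

definition is_path :: "('s \<times> 'a \<times> 's) set \<Rightarrow> 's \<Rightarrow> ('s, 'a) path \<Rightarrow> bool" where
  "is_path T s \<pi> \<longleftrightarrow> path_state \<pi> 0 = s \<and>
     (\<forall>i. enat i < path_len \<pi> \<longrightarrow>
          (path_state \<pi> i, path_act \<pi> i, path_state \<pi> (Suc i)) \<in> T)"

definition maximal_path :: "('s \<times> 'a \<times> 's) set \<Rightarrow> ('s, 'a) path \<Rightarrow> bool" where
  "maximal_path T \<pi> \<longleftrightarrow> path_len \<pi> = \<infinity> \<or>
     (\<exists>m. path_len \<pi> = enat m \<and> \<not> (\<exists>a t. (path_state \<pi> m, a, t) \<in> T))"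

text \<open>Indices i of transitions (the (i+1)-th step) that survive the contraction:
a step is removed exactly when it is a tau step whose target has the same colour
as its source, i.e. it lies inside a maximal block  C,tau,C,...,tau,C  (finite or
infinite), which is contracted to C.\<close>

definition kept :: "'a \<Rightarrow> ('s \<Rightarrow> 'c) \<Rightarrow> ('s, 'a) path \<Rightarrow> nat set" where
  "kept tau C \<pi> = {i. enat i < path_len \<pi> \<and>
      \<not> (path_act \<pi> i = tau \<and> C (path_state \<pi> (Suc i)) = C (path_state \<pi> i))}"

text \<open>A coloured trace is represented canonically as the initial colour together
with the (finite or infinite) sequence of remaining (action, colour) pairs,
given as a function nat \<Rightarrow> option that is Some on an initial segment of nat
and None afterwards.  The n-th entry is the n-th surviving step.\<close>

type_synonym ('a, 'c) ctrace = "'c \<times> (nat \<Rightarrow> ('a \<times> 'c) option)"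

definition coloured_trace :: "'a \<Rightarrow> ('s \<Rightarrow> 'c) \<Rightarrow> ('s, 'a) path \<Rightarrow> ('a, 'c) ctrace" where
  "coloured_trace tau C \<pi> =
    (C (path_state \<pi> 0),
     (\<lambda>n. if \<exists>k \<in> kept tau C \<pi>. card {j \<in> kept tau C \<pi>. j < k} = n
          then (let k = (THE k. k \<in> kept tau C \<pi> \<and> card {j \<in> kept tau C \<pi>. j < k} = n)
                in Some (path_act \<pi> k, C (path_state \<pi> (Suc k))))
          else None))"

definition ctraces :: "'a \<Rightarrow> ('s \<times> 'a \<times> 's) set \<Rightarrow> ('s \<Rightarrow> 'c) \<Rightarrow> 's \<Rightarrow> ('a, 'c) ctrace set" where
  "ctraces tau T C s = {coloured_trace tau C \<pi> | \<pi>. is_path T s \<pi>}"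

definition complete_ctraces :: "'a \<Rightarrow> ('s \<times> 'a \<times> 's) set \<Rightarrow> ('s \<Rightarrow> 'c) \<Rightarrow> 's \<Rightarrow> ('a, 'c) ctrace set" where
  "complete_ctraces tau T C s =
     {coloured_trace tau C \<pi> | \<pi>. is_path T s \<pi> \<and> maximal_path T \<pi>}"

definition divergent_ctraces :: "'a \<Rightarrow> ('s \<times> 'a \<times> 's) set \<Rightarrow> ('s \<Rightarrow> 'c) \<Rightarrow> 's \<Rightarrow> ('a, 'c) ctrace set" where
  "divergent_ctraces tau T C s =
     {coloured_trace tau C \<pi> | \<pi>. is_path T s \<pi> \<and> path_len \<pi> = \<infinity> \<and> finite (kept tau C \<pi>)}"

definition consistent :: "'a \<Rightarrow> ('s \<times> 'a \<times> 's) set \<Rightarrow> ('s \<Rightarrow> 'c) \<Rightarrow> bool" where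
  "consistent tau T C \<longleftrightarrow> (\<forall>s t. C s = C t \<longrightarrow> ctraces tau T C s = ctraces tau T C t)"

definition fully_consistent :: "'a \<Rightarrow> ('s \<times> 'a \<times> 's) set \<Rightarrow> ('s \<Rightarrow> 'c) \<Rightarrow> bool" where
  "fully_consistent tau T C \<longleftrightarrow>
     (\<forall>s t. C s = C t \<longrightarrow> complete_ctraces tau T C s = complete_ctraces tau T C t)"

definition div_preserving :: "'a \<Rightarrow> ('s \<times> 'a \<times> 's) set \<Rightarrow> ('s \<Rightarrow> 'c) \<Rightarrow> bool" where
  "div_preserving tau T C \<longleftrightarrow>
     (\<forall>s t. C s = C t \<longrightarrow> divergent_ctraces tau T C s = divergent_ctraces tau T C t)"

text \<open>Colours are taken from the type 's set; since
consistency notions are invariant under injective renaming of colours and any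
colouring can be renamed injectively to s \<mapsto> its colour class, this loses no
generality.\<close>

definition branching_bisim :: "'a \<Rightarrow> ('s \<times> 'a \<times> 's) set \<Rightarrow> 's \<Rightarrow> 's \<Rightarrow> bool" where
  "branching_bisim tau T s t \<longleftrightarrow>
     (\<exists>C :: 's \<Rightarrow> 's set. consistent tau T C \<and> C s = C t)"

definition branching_bisim_ds :: "'a \<Rightarrow> ('s \<times> 'a \<times> 's) set \<Rightarrow> 's \<Rightarrow> 's \<Rightarrow> bool" where
  "branching_bisim_ds tau T s t \<longleftrightarrow>
     (\<exists>C :: 's \<Rightarrow> 's set. fully_consistent tau T C \<and> C s = C t)"

definition branching_bisim_div :: "'a \<Rightarrow> ('s \<times> 'a \<times> 's) set \<Rightarrow> 's \<Rightarrow> 's \<Rightarrow> bool" where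
  "branching_bisim_div tau T s t \<longleftrightarrow>
     (\<exists>C :: 's \<Rightarrow> 's set. consistent tau T C \<and> div_preserving tau T C \<and> C s = C t)"

end

theory Submission
  imports Defs
begin

definition rk :: "nat set \<Rightarrow> nat \<Rightarrow> nat" where
  "rk K k = card {j \<in> K. j < k}"
definition isrk :: "nat set \<Rightarrow> nat \<Rightarrow> bool" where
  "isrk K n \<longleftrightarrow> (\<exists>k\<in>K. rk K k = n)"
definition nthk :: "nat set \<Rightarrow> nat \<Rightarrow> nat" where
  "nthk K n = (THE k. k \<in> K \<and> rk K k = n)"

lemma rk_mono: "j \<in> K \<Longrightarrow> j < k \<Longrightarrow> rk K j < rk K k"
  unfolding rk_def
proof (rule psubset_card_mono)
  show "finite {j \<in> K. j < k}" by (rule finite_subset[of _ "{..<k}"]) auto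
qed auto

lemma rk_inj: "j \<in> K \<Longrightarrow> k \<in> K \<Longrightarrow> rk K j = rk K k \<Longrightarrow> j = k"
  by (metis less_irrefl linorder_neqE_nat rk_mono)

lemma nthk_rk: "k \<in> K \<Longrightarrow> nthk K (rk K k) = k"
  unfolding nthk_def by (rule the_equality) (auto intro: rk_inj)

lemma nthk_props: "isrk K n \<Longrightarrow> nthk K n \<in> K \<and> rk K (nthk K n) = n"
  by (metis isrk_def nthk_rk)

lemma isrk_Suc: "isrk K (Suc m) \<Longrightarrow> isrk K m"
proof -
  assume "isrk K (Suc m)"
  then obtain k where k: "k \<in> K" "rk K k = Suc m" by (auto simp: isrk_def)
  define S where "S = {j \<in> K. j < k}"
  have fS: "finite S" unfolding S_def by (rule finite_subset[of _ "{..<k}"]) auto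
  have cS: "card S = Suc m" using k by (simp add: rk_def S_def)
  hence ne: "S \<noteq> {}" by auto
  define j where "j = Max S"
  have jS: "j \<in> S" using fS ne j_def by simp
  have "{x \<in> K. x < j} = S - {j}"
  proof
    show "{x \<in> K. x < j} \<subseteq> S - {j}" using jS by (auto simp: S_def)
    show "S - {j} \<subseteq> {x \<in> K. x < j}"
      using fS j_def by (auto simp: S_def) (metis Max_ge fS S_def le_neq_implies_less mem_Collect_eq)
  qed
  hence "rk K j = m" using cS fS jS by (simp add: rk_def)
  thus ?thesis using jS by (auto simp: isrk_def S_def)
qed

lemma isrk_le: "isrk K n \<Longrightarrow> m \<le> n \<Longrightarrow> isrk K m"
proof (induction n)
  case 0 thus ?case by simp
next
  case (Suc n)
  thus ?case by (metis isrk_Suc le_Suc_eq)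
qed

lemma nthk_mono: "isrk K n \<Longrightarrow> m < n \<Longrightarrow> nthk K m < nthk K n"
proof -
  assume a: "isrk K n" "m < n"
  hence b: "isrk K m" using isrk_le by simp
  show ?thesis
  proof (rule ccontr)
    assume "\<not> nthk K m < nthk K n"
    hence "nthk K n \<le> nthk K m" by simp
    then consider "nthk K n = nthk K m" | "nthk K n < nthk K m" by linarith
    thus False
    proof cases
      case 1 thus False using nthk_props[OF a(1)] nthk_props[OF b] a(2) by (metis less_irrefl)
    next
      case 2 thus False using rk_mono[of "nthk K n" K "nthk K m"] nthk_props[OF a(1)] nthk_props[OF b] a(2) by simp
    qed
  qed
qed

lemma gap: "isrk K n \<Longrightarrow> j \<in> K \<Longrightarrow> j < nthk K n \<Longrightarrow> rk K j < n \<and> j = nthk K (rk K j)"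
  using rk_mono[of j K "nthk K n"] nthk_props[of K n] nthk_rk[of j K] by simp

lemma finite_isrk: "finite K \<longleftrightarrow> (\<exists>n. \<not> isrk K n)"
proof
  assume f: "finite K"
  have "\<not> isrk K (card K)"
  proof
    assume "isrk K (card K)"
    then obtain k where k: "k \<in> K" "rk K k = card K" by (auto simp: isrk_def)
    have "card {j \<in> K. j < k} < card K"
      by (rule psubset_card_mono) (use f k in auto)
    thus False using k by (simp add: rk_def)
  qed
  thus "\<exists>n. \<not> isrk K n" by blast
next
  assume "\<exists>n. \<not> isrk K n"
  then obtain n where n: "\<not> isrk K n" by blast
  have "\<forall>k\<in>K. rk K k < n"
  proof
    fix k assume "k \<in> K"
    hence "isrk K (rk K k)" by (auto simp: isrk_def)
    thus "rk K k < n" using n isrk_le not_less by blast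
  qed
  hence "rk K ` K \<subseteq> {..<n}" by auto
  hence "finite (rk K ` K)" using finite_subset by blast
  moreover have "inj_on (rk K) K" by (auto intro: inj_onI rk_inj)
  ultimately show "finite K" using finite_imageD by blast
qed

lemma trace_eq:
  "coloured_trace tau C \<pi> = (C (path_state \<pi> 0),
     \<lambda>n. if isrk (kept tau C \<pi>) n
         then Some (path_act \<pi> (nthk (kept tau C \<pi>) n), C (path_state \<pi> (Suc (nthk (kept tau C \<pi>) n))))
         else None)"
  unfolding coloured_trace_def isrk_def rk_def nthk_def Let_def by simp

definition colC :: "('a,'c) ctrace \<Rightarrow> nat \<Rightarrow> 'c" where
  "colC tr n = (if n = 0 then fst tr else snd (the (snd tr (n - 1))))"

definition NN :: "'a \<Rightarrow> ('c \<Rightarrow> 'd) \<Rightarrow> ('a,'c) ctrace \<Rightarrow> nat set" where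
  "NN tau g tr = {n. \<exists>a c. snd tr n = Some (a,c) \<and> \<not> (a = tau \<and> g c = g (colC tr n))}"

definition Phi :: "'a \<Rightarrow> ('c \<Rightarrow> 'd) \<Rightarrow> ('a,'c) ctrace \<Rightarrow> ('a,'d) ctrace" where
  "Phi tau g tr = (g (fst tr), \<lambda>m. if isrk (NN tau g tr) m
      then Some (fst (the (snd tr (nthk (NN tau g tr) m))), g (snd (the (snd tr (nthk (NN tau g tr) m)))))
      else None)"

lemma kept_len: "k \<in> kept tau C \<pi> \<Longrightarrow> enat k < path_len \<pi>"
  by (simp add: kept_def)

lemma const_col:
  assumes "a \<le> b" "\<forall>i. a \<le> i \<and> i < b \<longrightarrow> i \<notin> kept tau C \<pi> \<and> enat i < path_len \<pi>"
  shows "C (path_state \<pi> b) = C (path_state \<pi> a)"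
  using assms
proof (induction b rule: dec_induct)
  case base thus ?case by simp
next
  case (step n)
  hence "n \<notin> kept tau C \<pi>" "enat n < path_len \<pi>" by auto
  hence "C (path_state \<pi> (Suc n)) = C (path_state \<pi> n)" by (simp add: kept_def)
  thus ?case using step by simp
qed

lemma col_lemma:
  assumes "isrk (kept tau C \<pi>) n"
  shows "C (path_state \<pi> (nthk (kept tau C \<pi>) n)) = colC (coloured_trace tau C \<pi>) n"
proof (cases n)
  case 0
  let ?K = "kept tau C \<pi>"
  have kin: "nthk ?K 0 \<in> ?K" using nthk_props assms 0 by blast
  have "C (path_state \<pi> (nthk ?K 0)) = C (path_state \<pi> 0)"
  proof (rule const_col)
    show "\<forall>i. 0 \<le> i \<and> i < nthk ?K 0 \<longrightarrow> i \<notin> ?K \<and> enat i < path_len \<pi>"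
    proof (intro allI impI conjI)
      fix i assume i: "0 \<le> i \<and> i < nthk ?K 0"
      show "i \<notin> ?K" using gap[of ?K 0 i] assms 0 i by auto
      show "enat i < path_len \<pi>" using kept_len[OF kin] i
        by (meson enat_ord_simps(2) order.strict_trans)
    qed
  qed simp
  thus ?thesis using 0 by (simp add: colC_def trace_eq)
next
  case (Suc m)
  let ?K = "kept tau C \<pi>"
  have m: "isrk ?K m" using assms Suc isrk_le by simp
  have kin: "nthk ?K n \<in> ?K" using nthk_props assms by blast
  have lt: "nthk ?K m < nthk ?K n" using nthk_mono assms Suc by simp
  have "C (path_state \<pi> (nthk ?K n)) = C (path_state \<pi> (Suc (nthk ?K m)))"
  proof (rule const_col)
    show "\<forall>i. Suc (nthk ?K m) \<le> i \<and> i < nthk ?K n \<longrightarrow> i \<notin> ?K \<and> enat i < path_len \<pi>"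
    proof (intro allI impI conjI)
      fix i assume i: "Suc (nthk ?K m) \<le> i \<and> i < nthk ?K n"
      show "i \<notin> ?K"
      proof
        assume iK: "i \<in> ?K"
        from gap[OF assms iK] i have r: "rk ?K i < n" "i = nthk ?K (rk ?K i)" by auto
        hence "rk ?K i \<le> m" using Suc by simp
        hence "nthk ?K (rk ?K i) \<le> nthk ?K m"
          using nthk_mono[OF m, of "rk ?K i"] by (cases "rk ?K i = m") auto
        thus False using r i by simp
      qed
      show "enat i < path_len \<pi>" using kept_len[OF kin] i
        by (meson enat_ord_simps(2) order.strict_trans)
    qed
  qed (use lt in simp)
  thus ?thesis using Suc m by (simp add: colC_def trace_eq)
qed

lemma kept_sub: "\<forall>x. D x = g (C x) \<Longrightarrow> kept tau D \<pi> \<subseteq> kept tau C \<pi>"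
  unfolding kept_def by auto

lemma compose:
  assumes Dg: "\<forall>x. D x = g (C x)"
  shows "coloured_trace tau D \<pi> = Phi tau g (coloured_trace tau C \<pi>)"
proof -
  let ?K = "kept tau C \<pi>"
  let ?L = "kept tau D \<pi>"
  let ?tr = "coloured_trace tau C \<pi>"
  let ?N = "NN tau g ?tr"
  have LK: "?L \<subseteq> ?K" using Dg unfolding kept_def by auto
  have sndtr: "isrk ?K n \<Longrightarrow> snd ?tr n = Some (path_act \<pi> (nthk ?K n), C (path_state \<pi> (Suc (nthk ?K n))))" for n
    by (simp add: trace_eq)
  have sndtr2: "\<not> isrk ?K n \<Longrightarrow> snd ?tr n = None" for n
    by (simp add: trace_eq)
  have NK: "n \<in> ?N \<Longrightarrow> isrk ?K n" for n
    using sndtr2 by (force simp: NN_def)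
  have CC: "isrk ?K n \<Longrightarrow> (nthk ?K n \<in> ?L \<longleftrightarrow> n \<in> ?N)" for n
  proof -
    assume r: "isrk ?K n"
    have kin: "nthk ?K n \<in> ?K" using nthk_props r by blast
    show ?thesis
      using kept_len[OF kin] col_lemma[OF r] sndtr[OF r] Dg
      by (auto simp: NN_def kept_def)
  qed
  have EE: "n \<in> ?N \<Longrightarrow> rk ?L (nthk ?K n) = rk ?N n" for n
  proof -
    assume nN: "n \<in> ?N"
    have rn: "isrk ?K n" using NK nN .
    have "{j \<in> ?L. j < nthk ?K n} = nthk ?K ` {m \<in> ?N. m < n}"
    proof
      show "{j \<in> ?L. j < nthk ?K n} \<subseteq> nthk ?K ` {m \<in> ?N. m < n}"
      proof
        fix j assume j: "j \<in> {j \<in> ?L. j < nthk ?K n}"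
        hence jK: "j \<in> ?K" using LK by auto
        from gap[OF rn jK] j have g1: "rk ?K j < n" "j = nthk ?K (rk ?K j)" by auto
        have "isrk ?K (rk ?K j)" using jK by (auto simp: isrk_def)
        hence "rk ?K j \<in> ?N" using CC[of "rk ?K j"] g1(2) j by (metis (no_types, lifting) mem_Collect_eq)
        thus "j \<in> nthk ?K ` {m \<in> ?N. m < n}" using g1 by auto
      qed
      show "nthk ?K ` {m \<in> ?N. m < n} \<subseteq> {j \<in> ?L. j < nthk ?K n}"
        using CC NK nthk_mono[OF rn] by auto
    qed
    moreover have "inj_on (nthk ?K) {m \<in> ?N. m < n}"
      by (rule inj_onI) (metis (no_types, lifting) NK mem_Collect_eq nthk_props)
    ultimately show ?thesis by (simp add: rk_def card_image)
  qed
  have IS: "isrk ?L m \<longleftrightarrow> isrk ?N m" for m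
  proof
    assume "isrk ?L m"
    then obtain k where k: "k \<in> ?L" "rk ?L k = m" by (auto simp: isrk_def)
    have kK: "k \<in> ?K" using LK k by auto
    have r: "isrk ?K (rk ?K k)" using kK by (auto simp: isrk_def)
    have nk: "nthk ?K (rk ?K k) = k" using nthk_rk[OF kK] .
    have "rk ?K k \<in> ?N" using CC[OF r] nk k by simp
    moreover have "rk ?N (rk ?K k) = m" using EE[OF calculation] nk k by simp
    ultimately show "isrk ?N m" by (auto simp: isrk_def)
  next
    assume a: "isrk ?N m"
    have nN: "nthk ?N m \<in> ?N" "rk ?N (nthk ?N m) = m" using nthk_props[OF a] by auto
    have "nthk ?K (nthk ?N m) \<in> ?L" using CC NK nN by auto
    moreover have "rk ?L (nthk ?K (nthk ?N m)) = m" using EE nN by auto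
    ultimately show "isrk ?L m" by (auto simp: isrk_def)
  qed
  have NT: "isrk ?N m \<Longrightarrow> nthk ?L m = nthk ?K (nthk ?N m)" for m
  proof -
    assume a: "isrk ?N m"
    have nN: "nthk ?N m \<in> ?N" "rk ?N (nthk ?N m) = m" using nthk_props[OF a] by auto
    have "nthk ?K (nthk ?N m) \<in> ?L" using CC NK nN by auto
    moreover have "rk ?L (nthk ?K (nthk ?N m)) = m" using EE nN by auto
    ultimately show ?thesis using nthk_rk by metis
  qed
  show ?thesis
  proof -
    have "snd (coloured_trace tau D \<pi>) m = snd (Phi tau g ?tr) m" for m
    proof (cases "isrk ?N m")
      case True
      have r: "isrk ?K (nthk ?N m)" using NK nthk_props[OF True] by blast
      show ?thesis using True IS NT sndtr[OF r] Dg
        by (simp add: Phi_def trace_eq[of tau D])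
    next
      case False
      thus ?thesis using IS by (simp add: Phi_def trace_eq[of tau D])
    qed
    moreover have "fst (coloured_trace tau D \<pi>) = fst (Phi tau g ?tr)"
      using Dg by (simp add: Phi_def trace_eq)
    ultimately show ?thesis by (metis prod_eq_iff ext)
  qed
qed



lemma ctr_img:
  assumes Dg: "\<forall>x. D x = g (C x)"
  shows "ctraces tau T D s = Phi tau g ` ctraces tau T C s"
proof -
  have h: "\<And>\<pi>. coloured_trace tau D \<pi> = Phi tau g (coloured_trace tau C \<pi>)"
    by (rule compose[where D=D and g=g and C=C, OF Dg])
  show ?thesis unfolding ctraces_def h by blast
qed

lemma cctr_img:
  assumes Dg: "\<forall>x. D x = g (C x)"
  shows "complete_ctraces tau T D s = Phi tau g ` complete_ctraces tau T C s"
proof -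
  have h: "\<And>\<pi>. coloured_trace tau D \<pi> = Phi tau g (coloured_trace tau C \<pi>)"
    by (rule compose[where D=D and g=g and C=C, OF Dg])
  show ?thesis unfolding complete_ctraces_def h by blast
qed

lemma none_iff: "(snd (coloured_trace tau C \<pi>) n = None) = (\<not> isrk (kept tau C \<pi>) n)"
  by (simp add: trace_eq)

lemma fin_kept_tr:
  assumes "coloured_trace tau C \<pi> = coloured_trace tau C \<pi>'"
  shows "finite (kept tau C \<pi>) = finite (kept tau C \<pi>')"
proof -
  have "isrk (kept tau C \<pi>) n = isrk (kept tau C \<pi>') n" for n
    using none_iff[of tau C \<pi> n] none_iff[of tau C \<pi>' n] assms by simp
  thus ?thesis unfolding finite_isrk by simp
qed

lemma inf_len: "infinite (kept tau C \<pi>) \<Longrightarrow> path_len \<pi> = \<infinity>"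
proof (rule ccontr)
  assume a: "infinite (kept tau C \<pi>)" "path_len \<pi> \<noteq> \<infinity>"
  then obtain m where m: "path_len \<pi> = enat m" by (cases "path_len \<pi>") auto
  have "kept tau C \<pi> \<subseteq> {..<m}" using m by (auto simp: kept_def)
  thus False using a finite_subset by blast
qed

lemma mem_div: "is_path T y \<pi> \<Longrightarrow> path_len \<pi> = \<infinity> \<Longrightarrow> finite (kept tau C \<pi>) \<Longrightarrow>
   coloured_trace tau C \<pi> \<in> divergent_ctraces tau T C y"
  unfolding divergent_ctraces_def by (rule CollectI, rule exI[of _ \<pi>]) simp

lemma mem_ctr: "is_path T y \<pi> \<Longrightarrow> coloured_trace tau C \<pi> \<in> ctraces tau T C y"
  unfolding ctraces_def by (rule CollectI, rule exI[of _ \<pi>]) simp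

lemma div_step:
  assumes c: "consistent tau T C" and d: "div_preserving tau T C" and yz: "C y = C z"
    and Dg: "\<forall>x. D x = g (C x)"
  shows "divergent_ctraces tau T D y \<subseteq> divergent_ctraces tau T D z"
proof
  fix x assume "x \<in> divergent_ctraces tau T D y"
  then obtain \<pi> where p: "x = coloured_trace tau D \<pi>" "is_path T y \<pi>" "path_len \<pi> = \<infinity>"
      "finite (kept tau D \<pi>)" unfolding divergent_ctraces_def mem_Collect_eq by blast
  obtain \<pi>' where p': "is_path T z \<pi>'" "path_len \<pi>' = \<infinity>"
       "coloured_trace tau C \<pi>' = coloured_trace tau C \<pi>"
  proof (cases "finite (kept tau C \<pi>)")
    case True
    have "coloured_trace tau C \<pi> \<in> divergent_ctraces tau T C y"
      by (rule mem_div[OF p(2) p(3) True])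
    hence "coloured_trace tau C \<pi> \<in> divergent_ctraces tau T C z"
      using d yz unfolding div_preserving_def by blast
    then obtain \<pi>' where e: "coloured_trace tau C \<pi> = coloured_trace tau C \<pi>'" and pz: "is_path T z \<pi>'"
        and l: "path_len \<pi>' = \<infinity>" unfolding divergent_ctraces_def mem_Collect_eq by blast
    show ?thesis by (rule that[OF pz l e[symmetric]])
  next
    case False
    have "coloured_trace tau C \<pi> \<in> ctraces tau T C y"
      by (rule mem_ctr[OF p(2)])
    hence "coloured_trace tau C \<pi> \<in> ctraces tau T C z"
      using c yz unfolding consistent_def by blast
    then obtain \<pi>' where e: "coloured_trace tau C \<pi> = coloured_trace tau C \<pi>'" and pz: "is_path T z \<pi>'"
      unfolding ctraces_def mem_Collect_eq by blast
    have "infinite (kept tau C \<pi>')" using fin_kept_tr[OF e] False by simp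
    hence l: "path_len \<pi>' = \<infinity>" by (rule inf_len)
    show ?thesis by (rule that[OF pz l e[symmetric]])
  qed
  have eq: "coloured_trace tau D \<pi>' = coloured_trace tau D \<pi>"
    unfolding compose[where D=D and g=g and C=C, OF Dg] p'(3) ..
  have fD: "finite (kept tau D \<pi>')" using fin_kept_tr[OF eq] p(4) by simp
  show "x \<in> divergent_ctraces tau T D z"
    using mem_div[OF p'(1) p'(2) fD] by (simp add: p(1) eq)
qed

lemma getg: "\<forall>x y. C x = C y \<longrightarrow> D x = D y \<Longrightarrow> \<exists>g. \<forall>x. D x = g (C x)"
proof -
  assume a: "\<forall>x y. C x = C y \<longrightarrow> D x = D y"
  have "\<forall>x. D x = D (SOME y. C y = C x)"
  proof
    fix x
    have "C (SOME y. C y = C x) = C x" by (rule someI) simp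
    thus "D x = D (SOME y. C y = C x)" using a by metis
  qed
  thus ?thesis by (intro exI[where x="\<lambda>c. D (SOME y. C y = c)"]) simp
qed

lemma chain: "(x,y) \<in> R\<^sup>* \<Longrightarrow> \<forall>y z. (y,z)\<in>R \<longrightarrow> F y = F z \<Longrightarrow> F x = F y"
  by (induction rule: rtrancl_induct) auto

lemma trans_gen:
  fixes C1 C2 :: "'s \<Rightarrow> 's set" and P :: "('s \<Rightarrow> 's set) \<Rightarrow> bool"
    and F :: "('s \<Rightarrow> 's set) \<Rightarrow> 's \<Rightarrow> 'x"
  assumes P1: "P C1" and P2: "P C2"
    and step: "\<And>C D y z. P C \<Longrightarrow> \<forall>x y. C x = C y \<longrightarrow> D x = D y \<Longrightarrow> C y = C z \<Longrightarrow> F D y = F D z"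
    and PI: "\<And>D. \<forall>y z. D y = D z \<longrightarrow> F D y = F D z \<Longrightarrow> P D"
    and st: "C1 s = C1 t" and tu: "C2 t = C2 u"
  shows "\<exists>D. P D \<and> D s = D u"
proof -
  define R where "R = {(x,y). C1 x = C1 y \<or> C2 x = C2 y}"
  define D where "D = (\<lambda>x. {y. (x,y) \<in> R\<^sup>*})"
  have symR: "sym R" unfolding R_def sym_def by auto
  have symRs: "sym (R\<^sup>*)" using symR sym_rtrancl by blast
  have Diff: "D x = D y \<longleftrightarrow> (x,y)\<in>R\<^sup>*" for x y
  proof
    assume "D x = D y"
    thus "(x,y)\<in>R\<^sup>*" unfolding D_def by (metis (mono_tags, lifting) mem_Collect_eq rtrancl.rtrancl_refl)
  next
    assume xy: "(x,y)\<in>R\<^sup>*"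
    hence yx: "(y,x)\<in>R\<^sup>*" using symRs by (meson symD)
    show "D x = D y" unfolding D_def
    proof (rule Collect_cong)
      fix z show "((x,z)\<in>R\<^sup>*) = ((y,z)\<in>R\<^sup>*)" using xy yx rtrancl_trans by metis
    qed
  qed
  have k1: "\<forall>x y. C1 x = C1 y \<longrightarrow> D x = D y"
  proof (intro allI impI)
    fix x y assume "C1 x = C1 y"
    hence "(x,y) \<in> R" by (simp add: R_def)
    thus "D x = D y" using Diff r_into_rtrancl by metis
  qed
  have k2: "\<forall>x y. C2 x = C2 y \<longrightarrow> D x = D y"
  proof (intro allI impI)
    fix x y assume "C2 x = C2 y"
    hence "(x,y) \<in> R" by (simp add: R_def)
    thus "D x = D y" using Diff r_into_rtrancl by metis
  qed
  have Rstep: "\<forall>y z. (y,z)\<in>R \<longrightarrow> F D y = F D z"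
  proof (intro allI impI)
    fix y z assume "(y,z)\<in>R"
    hence "C1 y = C1 z \<or> C2 y = C2 z" by (simp add: R_def)
    thus "F D y = F D z" using step[OF P1 k1] step[OF P2 k2] by blast
  qed
  have "P D"
  proof (rule PI, intro allI impI)
    fix y z assume "D y = D z"
    hence "(y,z) \<in> R\<^sup>*" using Diff by simp
    thus "F D y = F D z" using chain Rstep by metis
  qed
  moreover have "(s,u) \<in> R\<^sup>*"
  proof -
    have "(s,t) \<in> R" "(t,u) \<in> R" using st tu by (simp_all add: R_def)
    thus ?thesis by (meson r_into_rtrancl rtrancl_trans)
  qed
  ultimately show ?thesis using Diff by blast
qed

lemma inj_col: "consistent tau T (\<lambda>x. {x}) \<and> fully_consistent tau T (\<lambda>x. {x}) \<and> div_preserving tau T (\<lambda>x. {x})"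
  by (simp add: consistent_def fully_consistent_def div_preserving_def)

lemma trans1:
  fixes tau :: 'a and T :: "('s \<times> 'a \<times> 's) set" and C1 C2 :: "'s \<Rightarrow> 's set"
  assumes c: "consistent tau T C1" "C1 s = C1 t"
        "consistent tau T C2" "C2 t = C2 u"
  shows "\<exists>D :: 's \<Rightarrow> 's set. consistent tau T D \<and> D s = D u"
proof -
  have st: "ctraces tau T D y = ctraces tau T D z"
    if a: "consistent tau T C" "\<forall>x y. C x = C y \<longrightarrow> D x = D y" "C y = C z" for C D :: "'s \<Rightarrow> 's set" and y z
  proof -
    obtain g where g: "\<forall>x. D x = g (C x)" using getg[OF a(2)] by blast
    have "ctraces tau T C y = ctraces tau T C z" using a(1,3) unfolding consistent_def by blast
    thus ?thesis unfolding ctr_img[of D g C, OF g] by simp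
  qed
  have pi: "consistent tau T D" if "\<forall>y z. D y = D z \<longrightarrow> ctraces tau T D y = ctraces tau T D z"
    for D :: "'s \<Rightarrow> 's set"
    using that unfolding consistent_def by blast
  show ?thesis
  proof (rule trans_gen[where F = "ctraces tau T :: ('s \<Rightarrow> 's set) \<Rightarrow> 's \<Rightarrow> ('a, 's set) ctrace set" and P = "consistent tau T :: ('s \<Rightarrow> 's set) \<Rightarrow> bool"])
    show "consistent tau T C1" by (rule c(1))
    show "consistent tau T C2" by (rule c(3))
    show "C1 s = C1 t" by (rule c(2))
    show "C2 t = C2 u" by (rule c(4))
  next
    fix C D :: "'s \<Rightarrow> 's set" and y z
    assume h: "consistent tau T C" "\<forall>x y. C x = C y \<longrightarrow> D x = D y" "C y = C z"
    show "ctraces tau T D y = ctraces tau T D z" by (rule st[OF h])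
  next
    fix D :: "'s \<Rightarrow> 's set"
    assume h: "\<forall>y z. D y = D z \<longrightarrow> ctraces tau T D y = ctraces tau T D z"
    show "consistent tau T D" by (rule pi[OF h])
  qed
qed

lemma trans2:
  fixes tau :: 'a and T :: "('s \<times> 'a \<times> 's) set" and C1 C2 :: "'s \<Rightarrow> 's set"
  assumes c: "fully_consistent tau T C1" "C1 s = C1 t"
        "fully_consistent tau T C2" "C2 t = C2 u"
  shows "\<exists>D :: 's \<Rightarrow> 's set. fully_consistent tau T D \<and> D s = D u"
proof -
  have st: "complete_ctraces tau T D y = complete_ctraces tau T D z"
    if a: "fully_consistent tau T C" "\<forall>x y. C x = C y \<longrightarrow> D x = D y" "C y = C z" for C D :: "'s \<Rightarrow> 's set" and y z
  proof -
    obtain g where g: "\<forall>x. D x = g (C x)" using getg[OF a(2)] by blast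
    have "complete_ctraces tau T C y = complete_ctraces tau T C z" using a(1,3) unfolding fully_consistent_def by blast
    thus ?thesis unfolding cctr_img[of D g C, OF g] by simp
  qed
  have pi: "fully_consistent tau T D" if "\<forall>y z. D y = D z \<longrightarrow> complete_ctraces tau T D y = complete_ctraces tau T D z"
    for D :: "'s \<Rightarrow> 's set"
    using that unfolding fully_consistent_def by blast
  show ?thesis
  proof (rule trans_gen[where F = "complete_ctraces tau T :: ('s \<Rightarrow> 's set) \<Rightarrow> 's \<Rightarrow> ('a, 's set) ctrace set" and P = "fully_consistent tau T :: ('s \<Rightarrow> 's set) \<Rightarrow> bool"])
    show "fully_consistent tau T C1" by (rule c(1))
    show "fully_consistent tau T C2" by (rule c(3))
    show "C1 s = C1 t" by (rule c(2))
    show "C2 t = C2 u" by (rule c(4))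
  next
    fix C D :: "'s \<Rightarrow> 's set" and y z
    assume h: "fully_consistent tau T C" "\<forall>x y. C x = C y \<longrightarrow> D x = D y" "C y = C z"
    show "complete_ctraces tau T D y = complete_ctraces tau T D z" by (rule st[OF h])
  next
    fix D :: "'s \<Rightarrow> 's set"
    assume h: "\<forall>y z. D y = D z \<longrightarrow> complete_ctraces tau T D y = complete_ctraces tau T D z"
    show "fully_consistent tau T D" by (rule pi[OF h])
  qed
qed

definition cdp :: "'a \<Rightarrow> ('s \<times> 'a \<times> 's) set \<Rightarrow> ('s \<Rightarrow> 's set) \<Rightarrow> bool" where
  "cdp tau T D \<longleftrightarrow> consistent tau T D \<and> div_preserving tau T D"

definition cdF :: "'a \<Rightarrow> ('s \<times> 'a \<times> 's) set \<Rightarrow> ('s \<Rightarrow> 's set) \<Rightarrow> 's \<Rightarrow> ('a, 's set) ctrace set \<times> ('a, 's set) ctrace set" where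
  "cdF tau T D x = (ctraces tau T D x, divergent_ctraces tau T D x)"

lemma trans3:
  fixes tau :: 'a and T :: "('s \<times> 'a \<times> 's) set" and C1 C2 :: "'s \<Rightarrow> 's set"
  assumes c: "cdp tau T C1" "C1 s = C1 t" "cdp tau T C2" "C2 t = C2 u"
  shows "\<exists>D. cdp tau T D \<and> D s = D u"
proof -
  have st: "cdF tau T D y = cdF tau T D z"
    if a0: "cdp tau T C" and k: "\<forall>x y. C x = C y \<longrightarrow> D x = D y" and a3: "C y = C z"
    for C D :: "'s \<Rightarrow> 's set" and y z
  proof -
    obtain g where a2: "\<forall>x. D x = g (C x)" using getg[OF k] by blast
    have a1: "consistent tau T C" "div_preserving tau T C" using a0 unfolding cdp_def by auto
    have "ctraces tau T C y = ctraces tau T C z" using a1(1) a3 unfolding consistent_def by blast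
    hence "ctraces tau T D y = ctraces tau T D z" unfolding ctr_img[of D g C, OF a2] by simp
    moreover have "divergent_ctraces tau T D y = divergent_ctraces tau T D z"
      by (rule equalityI[OF div_step[OF a1(1) a1(2) a3 a2] div_step[OF a1(1) a1(2) a3[symmetric] a2]])
    ultimately show ?thesis unfolding cdF_def by simp
  qed
  have pi: "cdp tau T D"
    if H: "\<forall>y z. D y = D z \<longrightarrow> cdF tau T D y = cdF tau T D z"
    for D :: "'s \<Rightarrow> 's set"
  proof -
    have e: "ctraces tau T D y = ctraces tau T D z \<and> divergent_ctraces tau T D y = divergent_ctraces tau T D z"
      if yz: "D y = D z" for y z
    proof -
      have "cdF tau T D y = cdF tau T D z"
        using H[rule_format, OF yz] .
      thus ?thesis unfolding cdF_def by simp
    qed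
    show ?thesis unfolding cdp_def consistent_def div_preserving_def
    proof (intro conjI allI impI)
      fix y z assume "D y = D z"
      from e[OF this] show "ctraces tau T D y = ctraces tau T D z" by (rule conjunct1)
    next
      fix y z assume "D y = D z"
      from e[OF this] show "divergent_ctraces tau T D y = divergent_ctraces tau T D z" by (rule conjunct2)
    qed
  qed
  show ?thesis
  proof (rule trans_gen[where F = "cdF tau T" and P = "cdp tau T"])
    show "cdp tau T C1" by (rule c(1))
    show "cdp tau T C2" by (rule c(3))
    show "C1 s = C1 t" by (rule c(2))
    show "C2 t = C2 u" by (rule c(4))
  next
    fix C D :: "'s \<Rightarrow> 's set" and y z
    assume h: "cdp tau T C" "\<forall>x y. C x = C y \<longrightarrow> D x = D y" "C y = C z"
    show "cdF tau T D y = cdF tau T D z" by (rule st[OF h])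
  next
    fix D :: "'s \<Rightarrow> 's set"
    assume h: "\<forall>y z. D y = D z \<longrightarrow> cdF tau T D y = cdF tau T D z"
    show "cdp tau T D" by (rule pi[OF h])
  qed
qed

theorem theorem3p6:
  fixes tau :: 'a and T :: "('s \<times> 'a \<times> 's) set"
  shows "equivp (branching_bisim tau T) \<and> equivp (branching_bisim_ds tau T)
         \<and> equivp (branching_bisim_div tau T)"
proof (intro conjI)
  show "equivp (branching_bisim tau T)"
  proof (rule equivpI)
    show "reflp (branching_bisim tau T)"
      unfolding reflp_def branching_bisim_def using inj_col[of tau T] by blast
    show "symp (branching_bisim tau T)"
    proof (rule sympI)
      fix x y assume "branching_bisim tau T x y"
      then obtain C :: "'s \<Rightarrow> 's set" where "consistent tau T C" "C x = C y" unfolding branching_bisim_def by blast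
      thus "branching_bisim tau T y x" unfolding branching_bisim_def by blast
    qed
    show "transp (branching_bisim tau T)"
    proof (rule transpI)
      fix x y z assume "branching_bisim tau T x y" "branching_bisim tau T y z"
      then obtain C1 C2 :: "'s \<Rightarrow> 's set" where "consistent tau T C1" "C1 x = C1 y" "consistent tau T C2" "C2 y = C2 z"
        unfolding branching_bisim_def by blast
      from trans1[OF this] show "branching_bisim tau T x z" unfolding branching_bisim_def by blast
    qed
  qed
  show "equivp (branching_bisim_ds tau T)"
  proof (rule equivpI)
    show "reflp (branching_bisim_ds tau T)"
      unfolding reflp_def branching_bisim_ds_def using inj_col[of tau T] by blast
    show "symp (branching_bisim_ds tau T)"
    proof (rule sympI)
      fix x y assume "branching_bisim_ds tau T x y"
      then obtain C :: "'s \<Rightarrow> 's set" where "fully_consistent tau T C" "C x = C y" unfolding branching_bisim_ds_def by blast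
      thus "branching_bisim_ds tau T y x" unfolding branching_bisim_ds_def by blast
    qed
    show "transp (branching_bisim_ds tau T)"
    proof (rule transpI)
      fix x y z assume "branching_bisim_ds tau T x y" "branching_bisim_ds tau T y z"
      then obtain C1 C2 :: "'s \<Rightarrow> 's set" where "fully_consistent tau T C1" "C1 x = C1 y" "fully_consistent tau T C2" "C2 y = C2 z"
        unfolding branching_bisim_ds_def by blast
      from trans2[OF this] show "branching_bisim_ds tau T x z" unfolding branching_bisim_ds_def by blast
    qed
  qed
  show "equivp (branching_bisim_div tau T)"
  proof (rule equivpI)
    show "reflp (branching_bisim_div tau T)"
      unfolding reflp_def branching_bisim_div_def using inj_col[of tau T] by blast
    show "symp (branching_bisim_div tau T)"
    proof (rule sympI)
      fix x y assume "branching_bisim_div tau T x y"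
      then obtain C :: "'s \<Rightarrow> 's set" where "consistent tau T C \<and> div_preserving tau T C" "C x = C y" unfolding branching_bisim_div_def by blast
      thus "branching_bisim_div tau T y x" unfolding branching_bisim_div_def by blast
    qed
    show "transp (branching_bisim_div tau T)"
    proof (rule transpI)
      fix x y z assume "branching_bisim_div tau T x y" "branching_bisim_div tau T y z"
      then obtain C1 C2 :: "'s \<Rightarrow> 's set" where "cdp tau T C1" "C1 x = C1 y" "cdp tau T C2" "C2 y = C2 z"
        unfolding branching_bisim_div_def cdp_def by blast
      from trans3[OF this] show "branching_bisim_div tau T x z" unfolding branching_bisim_div_def cdp_def by blast
    qed
  qed
qed

end
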